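(* Let $(G,\mu,[R])$ be a random-predicate $k$-player game, let $i,p\in[k]$, and let $\varepsilon\in(0,1)$ with $\mathbf{val}(G)=1-\varepsilon$. Then $\mathbf{val}(\mathcal{T}^i_p(G))=1-\varepsilon'$ for some $\varepsilon'>0$ that depends only on $\varepsilon$ and the size of $G$.
   Context: A random-predicate $k$-player game $(G,\mu,[R])$ has finite question sets $\mathcal{X}_j$, finite answer sets $\mathcal{A}_j$, a distribution $\mu$ on $\mathcal{X}_1\times\cdots\times\mathcal{X}_k$ (all probabilities assumed to be multiples of $1/M$ for some integer $M$), and predicates $V_r$, $r\in[R]$; the verifier samples $q\sim\mu$ and $r\in[R]$ uniformly and independently, player $j$ answers $\alpha^j(q|_j)$ ($q|_j$ the $j$-th coordinate), and the verifier accepts iff $V_r(q,\text{answers})=1$; the value is the maximum acceptance probability over strategies. The size of $G$ is $k\cdot M\cdot\prod_j|\mathcal{X}_j||\mathcal{A}_j|$. The $i$-link distribution $L_i(G)$: sample $v\sim\mu|_i$ (marginal on coordinate $i$), then $q,q'$ independently from $\mu$ conditioned on $q|_i=q'|_i=v$. For $q=(x^1,\dots,x^k)$, $q'=(y^1,\dots,y^k)$ let $\Pi^p((q,q'))=(y^1,\dots,y^{p-1},x^p,y^{p+1},\dots,y^k)$. The game $\mathcal{T}^i_p(G)$ (same question and answer sets): the verifier samples $(q,q')\sim L_i(G)$ and $r\in[R]$ uniformly and independently, sends the coordinates of $\tilde q=\Pi^p((q,q'))$ to the players, and on answers $a$ accepts by default if $q\neq q'$, and if $q=q'$ (so $\tilde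 q=q$) accepts iff $V_r(q,a)=1$. Its value is the maximum acceptance probability over strategies $\alpha^j:\mathcal{X}_j\to\mathcal{A}_j$. *)

theory Defs
  imports Main "HOL-Library.FuncSet" Complex_Main
begin

text \<open>Players are 0..<k; questions and answers
are encoded as natural numbers (finite sets of them), so that one can quantify over
all games inside a formula.\<close>

record game =
  gk :: nat
  gX :: "nat \<Rightarrow> nat set"
  gA :: "nat \<Rightarrow> nat set"
  gmu :: "nat list \<Rightarrow> real"
  gM :: nat                              \<comment> \<open>probabilities are multiples of 1/M\<close>
  gR :: nat                              \<comment> \<open>number of predicates\<close>
  gV :: "nat \<Rightarrow> nat list \<Rightarrow> nat list \<Rightarrow> bool"

definition questions :: "game \<Rightarrow> nat list set" where
  "questions G = {q. length q = gk G \<and> (\<forall>j<gk G. q ! j \<in> gX G j)}"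

definition wf_game :: "game \<Rightarrow> bool" where
  "wf_game G \<longleftrightarrow>
     (\<forall>j<gk G. finite (gX G j) \<and> finite (gA G j) \<and> gA G j \<noteq> {})
   \<and> gR G \<ge> 1 \<and> gM G \<ge> 1
   \<and> (\<forall>q. gmu G q \<ge> 0)
   \<and> (\<forall>q. q \<notin> questions G \<longrightarrow> gmu G q = 0)
   \<and> (\<Sum>q\<in>questions G. gmu G q) = 1
   \<and> (\<forall>q. \<exists>n::nat. gmu G q = real n / real (gM G))"

definition game_size :: "game \<Rightarrow> nat" where
  "game_size G = gk G * gM G * (\<Prod>j<gk G. card (gX G j) * card (gA G j))"

definition strategy :: "game \<Rightarrow> (nat \<Rightarrow> nat \<Rightarrow> nat) \<Rightarrow> bool" where
  "strategy G \<alpha> \<longleftrightarrow> (\<forall>j<gk G. \<forall>x\<in>gX G j. \<alpha> j x \<in> gA G j)"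

definition answers :: "game \<Rightarrow> (nat \<Rightarrow> nat \<Rightarrow> nat) \<Rightarrow> nat list \<Rightarrow> nat list" where
  "answers G \<alpha> q = map (\<lambda>j. \<alpha> j (q ! j)) [0..<gk G]"

definition pred_acc :: "game \<Rightarrow> nat list \<Rightarrow> nat list \<Rightarrow> real" where
  "pred_acc G q a = (\<Sum>r<gR G. if gV G r q a then 1 else 0) / real (gR G)"

definition acc :: "game \<Rightarrow> (nat \<Rightarrow> nat \<Rightarrow> nat) \<Rightarrow> real" where
  "acc G \<alpha> = (\<Sum>q\<in>questions G. gmu G q * pred_acc G q (answers G \<alpha> q))"

definition val :: "game \<Rightarrow> real" where
  "val G = Sup {acc G \<alpha> | \<alpha>. strategy G \<alpha>}"

definition marg :: "game \<Rightarrow> nat \<Rightarrow> nat \<Rightarrow> real" where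
  "marg G i v = (\<Sum>q\<in>{q\<in>questions G. q ! i = v}. gmu G q)"

text \<open>The i-link distribution L_i(G): sample v from the i-marginal, then q, q'
independently from mu conditioned on coordinate i being v. Probability of (q,q').\<close>
definition link :: "game \<Rightarrow> nat \<Rightarrow> nat list \<Rightarrow> nat list \<Rightarrow> real" where
  "link G i q q' =
     (if q ! i = q' ! i then
        marg G i (q ! i) * (gmu G q / marg G i (q ! i)) * (gmu G q' / marg G i (q ! i))
      else 0)"

definition mix :: "game \<Rightarrow> nat \<Rightarrow> nat list \<Rightarrow> nat list \<Rightarrow> nat list" where
  "mix G p q q' = map (\<lambda>j. if j = p then q ! j else q' ! j) [0..<gk G]"

definition accT :: "game \<Rightarrow> nat \<Rightarrow> nat \<Rightarrow> (nat \<Rightarrow> nat \<Rightarrow> nat) \<Rightarrow> real" where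
  "accT G i p \<alpha> =
     (\<Sum>q\<in>questions G. \<Sum>q'\<in>questions G.
        link G i q q' *
        (if q \<noteq> q' then 1 else pred_acc G q (answers G \<alpha> (mix G p q q'))))"

definition valT :: "game \<Rightarrow> nat \<Rightarrow> nat \<Rightarrow> real" where
  "valT G i p = Sup {accT G i p \<alpha> | \<alpha>. strategy G \<alpha>}"

end

theory Submission
  imports Defs
begin

lemma finite_questions:
  assumes "wf_game G" shows "finite (questions G)"
proof -
  have "questions G \<subseteq> {xs. set xs \<subseteq> (\<Union>j<gk G. gX G j) \<and> length xs = gk G}"
    unfolding questions_def by (fastforce simp: in_set_conv_nth)
  moreover have "finite (\<Union>j<gk G. gX G j)" using assms unfolding wf_game_def by auto
  ultimately show ?thesis using finite_lists_length_eq finite_subset by blast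
qed

lemma pred_acc_bounds:
  assumes "wf_game G" shows "0 \<le> pred_acc G q a \<and> pred_acc G q a \<le> 1"
proof -
  have R: "gR G \<ge> 1" using assms unfolding wf_game_def by auto
  have "(\<Sum>r<gR G. if gV G r q a then 1 else 0::real) \<le> (\<Sum>r<gR G. 1)"
    by (rule sum_mono) auto
  then have "(\<Sum>r<gR G. if gV G r q a then 1 else 0::real) \<le> real (gR G)" by simp
  moreover have "(\<Sum>r<gR G. if gV G r q a then 1 else 0::real) \<ge> 0" by (rule sum_nonneg) auto
  ultimately show ?thesis unfolding pred_acc_def using R by (simp add: divide_le_eq_1)
qed

lemma acc_le1:
  assumes wf: "wf_game G" shows "acc G \<alpha> \<le> 1"
proof -
  have mu0: "\<And>q. gmu G q \<ge> 0" and ms: "(\<Sum>q\<in>questions G. gmu G q) = 1"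
    using wf unfolding wf_game_def by auto
  have "acc G \<alpha> \<le> (\<Sum>q\<in>questions G. gmu G q)" unfolding acc_def
    apply (rule sum_mono)
    using pred_acc_bounds[OF wf] mu0 by (simp add: mult_left_le)
  then show ?thesis using ms by simp
qed

lemma key:
  assumes wf: "wf_game G" and i: "i < gk G"
  shows "accT G i p \<alpha> \<le> 1 - (1 - acc G \<alpha>) / real (gM G)"
proof -
  define Q where "Q = questions G"
  have finQ: "finite Q" using finite_questions[OF wf] Q_def by simp
  have mu0: "\<And>q. gmu G q \<ge> 0" and ms: "(\<Sum>q\<in>Q. gmu G q) = 1"
    and M1: "gM G \<ge> 1" and muN: "\<And>q. \<exists>n::nat. gmu G q = real n / real (gM G)"
    using wf unfolding wf_game_def Q_def by auto
  define pa where "pa q = pred_acc G q (answers G \<alpha> q)" for q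
  have pa: "0 \<le> pa q \<and> pa q \<le> 1" for q using pred_acc_bounds[OF wf] pa_def by simp
  have muM: "gmu G q \<ge> 1 / real (gM G)" if "gmu G q > 0" for q
  proof -
    obtain n::nat where n: "gmu G q = real n / real (gM G)" using muN by blast
    have "n \<noteq> 0" proof assume "n = 0" then show False using n that by simp qed
    then have "real n \<ge> 1" by simp
    then show ?thesis using n M1 by (simp add: divide_right_mono)
  qed
  have marg0: "marg G i v \<ge> 0" for v unfolding marg_def by (rule sum_nonneg) (use mu0 in auto)
  have margle1: "marg G i v \<le> 1" for v
  proof -
    have "marg G i v \<le> (\<Sum>q\<in>Q. gmu G q)" unfolding marg_def Q_def
      by (rule sum_mono2) (use finQ Q_def mu0 in auto)
    then show ?thesis using ms by simp
  qed
  have mule: "gmu G q \<le> marg G i (q!i)" if "q \<in> Q" for q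
  proof -
    have "gmu G q = (\<Sum>q'\<in>{q}. gmu G q')" by simp
    also have "\<dots> \<le> marg G i (q!i)" unfolding marg_def
      by (rule sum_mono2) (use finQ Q_def mu0 that in auto)
    finally show ?thesis .
  qed
  have link0: "link G i q q' \<ge> 0" for q q'
    unfolding link_def using marg0 mu0 by auto
  have rowsum: "(\<Sum>q'\<in>Q. link G i q q') \<le> gmu G q" if q: "q \<in> Q" for q
  proof (cases "marg G i (q!i) = 0")
    case True
    have "link G i q q' = 0" for q' unfolding link_def True by simp
    then show ?thesis using mu0[of q] by simp
  next
    case False
    define m where "m = marg G i (q!i)"
    have mpos: "m > 0" using False marg0 m_def by (simp add: order_less_le)
    have "(\<Sum>q'\<in>Q. link G i q q') = (\<Sum>q'\<in>Q. if q'!i = q!i then gmu G q * gmu G q' / m else 0)"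
      unfolding link_def m_def[symmetric] using mpos
      by (intro sum.cong) (auto simp: field_simps power2_eq_square)
    also have "\<dots> = (\<Sum>q'\<in>{q'\<in>Q. q'!i = q!i}. gmu G q * gmu G q' / m)"
      by (simp add: sum.inter_filter[OF finQ])
    also have "\<dots> = gmu G q / m * (\<Sum>q'\<in>{q'\<in>Q. q'!i = q!i}. gmu G q')"
      by (simp add: sum_distrib_left)
    also have "(\<Sum>q'\<in>{q'\<in>Q. q'!i = q!i}. gmu G q') = m"
      unfolding m_def marg_def Q_def by (rule sum.cong) auto
    finally show ?thesis using mpos by simp
  qed
  have diag: "link G i q q \<ge> gmu G q / real (gM G)" if q: "q \<in> Q" for q
  proof (cases "gmu G q > 0")
    case False
    then show ?thesis using link0[of q q] mu0[of q] M1 by auto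
  next
    case True
    define m where "m = marg G i (q!i)"
    have mpos: "m > 0" using mule[OF q] True m_def by simp
    have m1: "m \<le> 1" using margle1 m_def by simp
    have "link G i q q = gmu G q * gmu G q / m" unfolding link_def m_def[symmetric]
      using mpos by (simp add: field_simps power2_eq_square)
    also have "\<dots> \<ge> gmu G q * gmu G q"
      using mpos m1 True by (simp add: le_divide_eq mult_left_le)
    moreover have "gmu G q * gmu G q \<ge> gmu G q * (1 / real (gM G))"
      using mult_left_mono[OF muM[OF True], of "gmu G q"] True by simp
    ultimately show ?thesis by simp
  qed
  have mixqq: "mix G p q q = q" if "q \<in> Q" for q
    using that unfolding mix_def Q_def questions_def by (metis (mono_tags, lifting) mem_Collect_eq map_nth)
  have row: "(\<Sum>q'\<in>Q. link G i q q' * (if q \<noteq> q' then 1 else pred_acc G q (answers G \<alpha> (mix G p q q'))))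
      \<le> gmu G q - gmu G q * (1 - pa q) / real (gM G)" if q: "q \<in> Q" for q
  proof -
    have "(\<Sum>q'\<in>Q. link G i q q' * (if q \<noteq> q' then 1 else pred_acc G q (answers G \<alpha> (mix G p q q'))))
       = (\<Sum>q'\<in>Q. link G i q q' - (if q = q' then link G i q q * (1 - pa q) else 0))"
      by (intro sum.cong) (auto simp: mixqq[OF q] pa_def algebra_simps)
    also have "\<dots> = (\<Sum>q'\<in>Q. link G i q q') - link G i q q * (1 - pa q)"
      using q finQ by (simp add: sum_subtractf)
    also have "\<dots> \<le> gmu G q - gmu G q / real (gM G) * (1 - pa q)"
      using rowsum[OF q] diag[OF q] pa[of q] by (smt (verit) mult_right_mono)
    finally show ?thesis by simp
  qed
  have "accT G i p \<alpha> \<le> (\<Sum>q\<in>Q. gmu G q - gmu G q * (1 - pa q) / real (gM G))"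
    unfolding accT_def Q_def[symmetric] by (rule sum_mono) (rule row)
  also have "\<dots> = 1 - (\<Sum>q\<in>Q. gmu G q - gmu G q * pa q) / real (gM G)"
  proof -
    have "(\<Sum>q\<in>Q. gmu G q - gmu G q * (1 - pa q) / real (gM G))
       = (\<Sum>q\<in>Q. gmu G q) - (\<Sum>q\<in>Q. (gmu G q - gmu G q * pa q) / real (gM G))"
      by (simp add: sum_subtractf right_diff_distrib)
    then show ?thesis using ms by (simp add: sum_divide_distrib)
  qed
  also have "(\<Sum>q\<in>Q. gmu G q - gmu G q * pa q) = 1 - acc G \<alpha>"
    using ms unfolding acc_def Q_def pa_def by (simp add: sum_subtractf)
  finally show ?thesis .
qed

theorem claim3p4:
  shows "\<exists>\<delta> :: real \<Rightarrow> nat \<Rightarrow> real.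
     (\<forall>\<epsilon> s. 0 < \<epsilon> \<and> \<epsilon> < 1 \<longrightarrow> 0 < \<delta> \<epsilon> s) \<and>
     (\<forall>G i p \<epsilon>. wf_game G \<and> i < gk G \<and> p < gk G \<and> 0 < \<epsilon> \<and> \<epsilon> < 1 \<and> val G = 1 - \<epsilon>
        \<longrightarrow> valT G i p \<le> 1 - \<delta> \<epsilon> (game_size G))"
proof (intro exI[of _ "\<lambda>\<epsilon> s. \<epsilon> / (real s + 1)"] conjI allI impI)
  fix \<epsilon> :: real and s :: nat
  assume "0 < \<epsilon> \<and> \<epsilon> < 1"
  then show "0 < \<epsilon> / (real s + 1)" by simp
next
  fix G i p \<epsilon>
  assume a: "wf_game G \<and> i < gk G \<and> p < gk G \<and> 0 < \<epsilon> \<and> \<epsilon> < 1 \<and> val G = 1 - \<epsilon>"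
  then have wf: "wf_game G" and i: "i < gk G" and e: "0 < \<epsilon>" and v: "val G = 1 - \<epsilon>" by auto
  have M1: "gM G \<ge> 1" and ms: "(\<Sum>q\<in>questions G. gmu G q) = 1"
    and fin: "\<forall>j<gk G. finite (gX G j) \<and> finite (gA G j) \<and> gA G j \<noteq> {}"
    using wf unfolding wf_game_def by auto
  have "questions G \<noteq> {}" using ms by (metis sum.empty zero_neq_one)
  then obtain q0 where q0: "q0 \<in> questions G" by blast
  have P1: "(1::nat) \<le> (\<Prod>j<gk G. card (gX G j) * card (gA G j))"
  proof (rule prod_ge_1)
    fix j assume j: "j \<in> {..<gk G}"
    have "q0 ! j \<in> gX G j" using q0 j unfolding questions_def by auto
    then have "card (gX G j) > 0" using fin j by (auto simp: card_gt_0_iff)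
    moreover have "card (gA G j) > 0" using fin j by (simp add: card_gt_0_iff)
    ultimately show "1 \<le> card (gX G j) * card (gA G j)" by (simp add: Suc_le_eq)
  qed
  have K: "gM G * 1 \<le> gk G * gM G" using i by simp
  have "gM G * 1 * 1 \<le> gk G * gM G * (\<Prod>j<gk G. card (gX G j) * card (gA G j))"
    by (rule mult_le_mono[OF K P1])
  then have "gM G \<le> game_size G" unfolding game_size_def by simp
  then have sz: "real (gM G) \<le> real (game_size G) + 1" by simp
  have accle: "acc G \<alpha> \<le> 1 - \<epsilon>" if "strategy G \<alpha>" for \<alpha>
  proof -
    have "bdd_above {acc G \<alpha> | \<alpha>. strategy G \<alpha>}"
      using acc_le1[OF wf] by (intro bdd_aboveI[of _ 1]) auto
    then have "acc G \<alpha> \<le> val G" unfolding val_def using that by (intro cSup_upper) auto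
    then show ?thesis using v by simp
  qed
  have bnd: "accT G i p \<alpha> \<le> 1 - \<epsilon> / (real (game_size G) + 1)" if "strategy G \<alpha>" for \<alpha>
  proof -
    have "accT G i p \<alpha> \<le> 1 - (1 - acc G \<alpha>) / real (gM G)" by (rule key[OF wf i])
    also have "\<dots> \<le> 1 - \<epsilon> / real (gM G)"
      using accle[OF that] M1 by (simp add: divide_right_mono)
    also have "\<dots> \<le> 1 - \<epsilon> / (real (game_size G) + 1)"
      using sz e M1 by (simp add: frac_le)
    finally show ?thesis .
  qed
  define \<alpha>0 where "\<alpha>0 j x = (SOME a. a \<in> gA G j)" for j x :: nat
  have "strategy G \<alpha>0" unfolding strategy_def \<alpha>0_def using fin by (auto simp: some_in_eq)
  then have ne: "{accT G i p \<alpha> | \<alpha>. strategy G \<alpha>} \<noteq> {}" by auto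
  show "valT G i p \<le> 1 - \<epsilon> / (real (game_size G) + 1)"
    unfolding valT_def using ne bnd by (intro cSup_least) auto
qed

end
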